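(* Let $F$ be a field of characteristic not $2$. The compositum of the $W$-fields $L^{(3)}$ of all quadratic extensions $L$ of $F$ is contained in $F^{(5)}$.
   Context: All fields are taken inside a fixed quadratic closure $F_q$ of $F$. For a field $K$ of characteristic not $2$, define $K^{(1)}=K$ and, for $n\ge 1$, $K^{(n+1)}$ is the compositum of all quadratic extensions of $K^{(n)}$ which are Galois over $K$. The $W$-field of $K$ is $K^{(3)}$. *)

theory Defs
  imports "HOL-Computational_Algebra.Polynomial"
begin

text \<open>All fields are subsets of an ambient field type 'a, whose universe
  plays the role of the fixed quadratic closure F_q.\<close>

definition subfield :: "'a::field set \<Rightarrow> bool" where
  "subfield K \<longleftrightarrow> 0 \<in> K \<and> 1 \<in> K \<and>
     (\<forall>x\<in>K. \<forall>y\<in>K. x + y \<in> K \<and> x * y \<in> K) \<and>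
     (\<forall>x\<in>K. - x \<in> K \<and> inverse x \<in> K)"

definition gen_field :: "'a::field set \<Rightarrow> 'a set" where
  "gen_field A = \<Inter>{E. subfield E \<and> A \<subseteq> E}"

definition ext_degree_eq :: "'a::field set \<Rightarrow> 'a set \<Rightarrow> nat \<Rightarrow> bool" where
  "ext_degree_eq K L n \<longleftrightarrow> (\<exists>B. B \<subseteq> L \<and> finite B \<and> card B = n \<and>
     (\<forall>c. (\<forall>b\<in>B. c b \<in> K) \<and> (\<Sum>b\<in>B. c b * b) = 0 \<longrightarrow> (\<forall>b\<in>B. c b = 0)) \<and>
     (\<forall>x\<in>L. \<exists>c. (\<forall>b\<in>B. c b \<in> K) \<and> x = (\<Sum>b\<in>B. c b * b)))"

definition quad_ext :: "'a::field set \<Rightarrow> 'a set \<Rightarrow> bool" where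
  "quad_ext K L \<longleftrightarrow> subfield K \<and> subfield L \<and> K \<subseteq> L \<and> ext_degree_eq K L 2"

definition min_poly_over :: "'a::field set \<Rightarrow> 'a \<Rightarrow> 'a poly \<Rightarrow> bool" where
  "min_poly_over K x p \<longleftrightarrow> p \<noteq> 0 \<and> lead_coeff p = 1 \<and> (\<forall>i. coeff p i \<in> K) \<and>
     poly p x = 0 \<and>
     (\<forall>q. q \<noteq> 0 \<and> (\<forall>i. coeff q i \<in> K) \<and> poly q x = 0 \<longrightarrow> degree p \<le> degree q)"

text \<open>L/K is Galois: algebraic, normal and separable, i.e. the minimal polynomial over K
  of every element of L splits into distinct linear factors over L.\<close>
definition galois :: "'a::field set \<Rightarrow> 'a set \<Rightarrow> bool" where
  "galois K L \<longleftrightarrow> subfield K \<and> subfield L \<and> K \<subseteq> L \<and>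
     (\<forall>x\<in>L. \<exists>p. min_poly_over K x p \<and> card {r \<in> L. poly p r = 0} = degree p)"

text \<open>qpow K n = K^{(n)} for n \<ge> 1 (qpow K 0 = K is a dummy value).\<close>
fun qpow :: "'a::field set \<Rightarrow> nat \<Rightarrow> 'a set" where
  "qpow K 0 = K"
| "qpow K (Suc 0) = K"
| "qpow K (Suc (Suc n)) =
     gen_field (qpow K (Suc n) \<union> \<Union>{L. quad_ext (qpow K (Suc n)) L \<and> galois K L})"

definition W_field :: "'a::field set \<Rightarrow> 'a set" where
  "W_field K = qpow K 3"

definition is_quadratic_closure :: "'a::field set \<Rightarrow> bool" where
  "is_quadratic_closure F \<longleftrightarrow> subfield F \<and> (\<forall>x::'a. \<exists>y. y * y = x) \<and>
     (\<forall>E. subfield E \<and> F \<subseteq> E \<and> (\<forall>x\<in>E. \<exists>y\<in>E. y * y = x) \<longrightarrow> E = UNIV)"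

end

theory Submission
  imports Defs
begin



definition hom :: "('a::field \<Rightarrow> 'a) \<Rightarrow> bool" where
  "hom s \<longleftrightarrow> (\<forall>x y. s (x + y) = s x + s y \<and> s (x * y) = s x * s y) \<and> s 1 = 1"

definition autK :: "'a::field set \<Rightarrow> ('a \<Rightarrow> 'a) \<Rightarrow> bool" where
  "autK K s \<longleftrightarrow> bij s \<and> hom s \<and> (\<forall>x\<in>K. s x = x)"

definition adj :: "'a::field set \<Rightarrow> 'a \<Rightarrow> 'a set" where
  "adj E e = {u + v * e | u v. u \<in> E \<and> v \<in> E}"

lemma hom_add: "hom s \<Longrightarrow> s (x + y) = s x + s y" by (simp add: hom_def)
lemma hom_mult: "hom s \<Longrightarrow> s (x * y) = s x * s y" by (simp add: hom_def)
lemma hom_one: "hom s \<Longrightarrow> s 1 = 1" by (simp add: hom_def)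
lemma hom_zero: "hom s \<Longrightarrow> s 0 = 0"
proof -
  assume "hom s"
  then have "s 0 + s 0 = s 0 + 0" using hom_add[of s 0 0] by simp
  then show "s 0 = 0" by (rule add_left_imp_eq)
qed
lemma hom_uminus: "hom s \<Longrightarrow> s (- x) = - s x"
  using hom_add[of s x "-x"] hom_zero[of s] minus_unique[of "s x" "s (-x)"] by simp
lemma hom_diff: "hom s \<Longrightarrow> s (x - y) = s x - s y"
  using hom_add[of s x "-y"] hom_uminus[of s y] by simp
lemma hom_inverse: "hom s \<Longrightarrow> s (inverse x) = inverse (s x)"
proof (cases "x = 0")
  case True assume "hom s" then show ?thesis using True hom_zero[of s] by simp
next
  case False assume h: "hom s"
  have "s x * s (inverse x) = 1" using hom_mult[OF h, of x "inverse x"] hom_one[OF h] False by simp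
  then show ?thesis by (metis inverse_unique mult.commute)
qed
lemma hom_divide: "hom s \<Longrightarrow> s (x / y) = s x / s y"
  by (simp add: divide_inverse hom_mult hom_inverse)
lemma hom_power: "hom s \<Longrightarrow> s (x ^ n) = s x ^ n"
  by (induction n) (simp_all add: hom_one hom_mult)
lemma hom_numeral: "hom s \<Longrightarrow> s (numeral n) = numeral n"
proof (induction n)
  case One then show ?case by (simp add: hom_one)
next
  case (Bit0 n) then show ?case using hom_add[of s "numeral n" "numeral n"] by (simp add: numeral_Bit0)
next
  case (Bit1 n) then show ?case using hom_add[of s "numeral n + numeral n" 1] hom_add[of s "numeral n" "numeral n"] hom_one[of s]
    by (simp add: numeral_Bit1 numeral_Bit0)
qed
lemma hom_inj: "hom s \<Longrightarrow> inj s"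
proof (rule injI)
  fix x y assume h: "hom s" and e: "s x = s y"
  show "x = y"
  proof (rule ccontr)
    assume "x \<noteq> y"
    then have "(x - y) * inverse (x - y) = 1" by simp
    then have "s (x - y) * s (inverse (x - y)) = 1" using hom_mult[OF h] hom_one[OF h] by metis
    then show False using e hom_diff[OF h] by simp
  qed
qed
lemma hom_sum: "hom s \<Longrightarrow> s (sum f A) = sum (\<lambda>i. s (f i)) A"
  by (induction A rule: infinite_finite_induct) (simp_all add: hom_zero hom_add)
lemma hom_prod: "hom s \<Longrightarrow> s (prod f A) = prod (\<lambda>i. s (f i)) A"
  by (induction A rule: infinite_finite_induct) (simp_all add: hom_one hom_mult)
lemma hom_comp: "hom s \<Longrightarrow> hom t \<Longrightarrow> hom (s \<circ> t)"
  by (simp add: hom_def)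
lemma hom_inv: assumes h: "hom s" and b: "bij s" shows "hom (inv s)"
proof -
  have sx: "\<And>x. s (inv s x) = x" using b by (simp add: bij_is_surj surj_f_inv_f)
  have ix: "\<And>x. inv s (s x) = x" using b by (simp add: bij_is_inj inv_f_f)
  have "inv s (x + y) = inv s x + inv s y" for x y
    using ix[of "inv s x + inv s y"] hom_add[OF h, of "inv s x" "inv s y"] sx by simp
  moreover have "inv s (x * y) = inv s x * inv s y" for x y
    using ix[of "inv s x * inv s y"] hom_mult[OF h, of "inv s x" "inv s y"] sx by simp
  moreover have "inv s 1 = 1" using ix[of 1] hom_one[OF h] by simp
  ultimately show ?thesis by (simp add: hom_def)
qed

lemma autK_comp: "autK K s \<Longrightarrow> autK K t \<Longrightarrow> autK K (s \<circ> t)"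
  by (auto simp: autK_def hom_comp bij_comp)
lemma autK_inv: assumes "autK K s" shows "autK K (inv s)"
proof -
  have b: "bij s" and h: "hom s" and f: "\<forall>x\<in>K. s x = x" using assms by (auto simp: autK_def)
  have "\<forall>x\<in>K. inv s x = x" using f b by (metis bij_is_inj inv_f_f)
  then show ?thesis using b h by (simp add: autK_def bij_imp_bij_inv hom_inv)
qed
lemma autK_id: "autK K id"
  by (simp add: autK_def hom_def)

lemma subfield_UNIV: "subfield UNIV" by (simp add: subfield_def)
lemma subfield_0: "subfield K \<Longrightarrow> 0 \<in> K" by (simp add: subfield_def)
lemma subfield_1: "subfield K \<Longrightarrow> 1 \<in> K" by (simp add: subfield_def)
lemma subfield_add: "subfield K \<Longrightarrow> x \<in> K \<Longrightarrow> y \<in> K \<Longrightarrow> x + y \<in> K" by (simp add: subfield_def)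
lemma subfield_mult: "subfield K \<Longrightarrow> x \<in> K \<Longrightarrow> y \<in> K \<Longrightarrow> x * y \<in> K" by (simp add: subfield_def)
lemma subfield_uminus: "subfield K \<Longrightarrow> x \<in> K \<Longrightarrow> - x \<in> K" by (simp add: subfield_def)
lemma subfield_inverse: "subfield K \<Longrightarrow> x \<in> K \<Longrightarrow> inverse x \<in> K" by (simp add: subfield_def)
lemma subfield_diff: "subfield K \<Longrightarrow> x \<in> K \<Longrightarrow> y \<in> K \<Longrightarrow> x - y \<in> K"
  using subfield_add[of K x "-y"] subfield_uminus by auto
lemma subfield_divide: "subfield K \<Longrightarrow> x \<in> K \<Longrightarrow> y \<in> K \<Longrightarrow> x / y \<in> K"
  by (simp add: divide_inverse subfield_mult subfield_inverse)
lemma subfield_power: "subfield K \<Longrightarrow> x \<in> K \<Longrightarrow> x ^ n \<in> K"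
  by (induction n) (simp_all add: subfield_1 subfield_mult)
lemma subfield_numeral: "subfield K \<Longrightarrow> numeral n \<in> K"
proof (induction n)
  case One then show ?case by (simp add: subfield_1)
next
  case (Bit0 n) then show ?case by (metis numeral_Bit0 subfield_add)
next
  case (Bit1 n) then show ?case by (metis numeral_Bit1 numeral_Bit0 subfield_add subfield_1)
qed
lemma subfield_sum: "subfield K \<Longrightarrow> (\<And>i. i \<in> A \<Longrightarrow> f i \<in> K) \<Longrightarrow> sum f A \<in> K"
  by (induction A rule: infinite_finite_induct) (simp_all add: subfield_0 subfield_add)

lemma gen_field_subfield: "subfield (gen_field A)"
  unfolding gen_field_def subfield_def by blast
lemma gen_field_sup: "A \<subseteq> gen_field A"
  unfolding gen_field_def by blast
lemma gen_field_least: "subfield E \<Longrightarrow> A \<subseteq> E \<Longrightarrow> gen_field A \<subseteq> E"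
  unfolding gen_field_def by blast

lemma gen_field_stable:
  assumes h: "hom s" and st: "\<And>x. x \<in> A \<Longrightarrow> s x \<in> A"
  shows "x \<in> gen_field A \<Longrightarrow> s x \<in> gen_field A"
proof -
  let ?E = "{y. s y \<in> gen_field A}"
  have "subfield ?E"
    using gen_field_subfield[of A]
    unfolding subfield_def by (auto simp: hom_zero[OF h] hom_one[OF h] hom_add[OF h] hom_mult[OF h] hom_uminus[OF h] hom_inverse[OF h])
  moreover have "A \<subseteq> ?E" using st gen_field_sup by blast
  ultimately have "gen_field A \<subseteq> ?E" by (rule gen_field_least)
  then show "x \<in> gen_field A \<Longrightarrow> s x \<in> gen_field A" by blast
qed

lemma qpow_SS: "qpow K (Suc (Suc n)) =
     gen_field (qpow K (Suc n) \<union> \<Union>{L. quad_ext (qpow K (Suc n)) L \<and> galois K L})"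
  by simp

lemma qpow_subfield: assumes "subfield K" shows "subfield (qpow K n)"
proof (cases n)
  case (Suc m) then show ?thesis using assms by (cases m) (simp_all add: gen_field_subfield)
qed (simp add: assms)

lemma qpow_mono_Suc: "qpow K n \<subseteq> qpow K (Suc n)"
proof (cases n)
  case 0 then show ?thesis by simp
next
  case (Suc m) then show ?thesis using gen_field_sup by (simp only: qpow_SS) blast
qed

lemma qpow_mono: "m \<le> n \<Longrightarrow> qpow K m \<subseteq> qpow K n"
proof (induction n)
  case 0 then show ?case by simp
next
  case (Suc n) then show ?case using qpow_mono_Suc[of K n] by (auto simp: le_Suc_eq)
qed

lemma qpow_base: "K \<subseteq> qpow K n"
  using qpow_mono[of 0 n K] by simp




lemma adj_sub: "subfield E \<Longrightarrow> E \<subseteq> adj E e"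
  unfolding adj_def by (force intro: subfield_0)
lemma adj_gen: "subfield E \<Longrightarrow> e \<in> adj E e"
  unfolding adj_def using subfield_0 subfield_1 by force
lemma adj_mono: "E \<subseteq> E' \<Longrightarrow> adj E e \<subseteq> adj E' e"
  unfolding adj_def by blast
lemma adj_in: "subfield E' \<Longrightarrow> E \<subseteq> E' \<Longrightarrow> e \<in> E' \<Longrightarrow> adj E e \<subseteq> E'"
  unfolding adj_def by (auto intro!: subfield_add subfield_mult)
lemma adj_triv: "subfield E \<Longrightarrow> e \<in> E \<Longrightarrow> adj E e = E"
  using adj_in[of E E e] adj_sub[of E e] by blast

lemma adj_unique:
  assumes "subfield E" "e \<notin> E" "u \<in> E" "v \<in> E" "u' \<in> E" "v' \<in> E" "u + v * e = u' + v' * e"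
  shows "u = u' \<and> v = v'"
proof -
  have "v = v'"
  proof (rule ccontr)
    assume "v \<noteq> v'"
    then have "e = (u' - u) / (v - v')" using assms(7)
      by (simp add: field_simps)
    then show False using assms by (metis subfield_diff subfield_divide)
  qed
  then show ?thesis using assms(7) by simp
qed

lemma adj_subfield:
  assumes E: "subfield E" and c: "e * e \<in> E"
  shows "subfield (adj E e)"
proof (cases "e \<in> E")
  case True then show ?thesis using adj_triv[OF E] E by simp
next
  case False
  have closed_add: "x + y \<in> adj E e" if hx: "x \<in> adj E e" and hy: "y \<in> adj E e" for x y
  proof -
    obtain u v u' v' where "x = u + v * e" "y = u' + v' * e" "u \<in> E" "v \<in> E" "u' \<in> E" "v' \<in> E"
      using hx hy unfolding adj_def by blast
    then have "x + y = (u + u') + (v + v') * e" "u + u' \<in> E" "v + v' \<in> E"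
      by (auto simp: algebra_simps E subfield_add)
    then show ?thesis unfolding adj_def by blast
  qed
  have closed_mult: "x * y \<in> adj E e" if hx: "x \<in> adj E e" and hy: "y \<in> adj E e" for x y
  proof -
    obtain u v u' v' where "x = u + v * e" "y = u' + v' * e" "u \<in> E" "v \<in> E" "u' \<in> E" "v' \<in> E"
      using hx hy unfolding adj_def by blast
    note h = this
    have "x * y = (u * u' + v * v' * (e * e)) + (u * v' + v * u') * e"
      using h by (simp add: algebra_simps)
    moreover have "u * u' + v * v' * (e * e) \<in> E" "u * v' + v * u' \<in> E"
      using h by (simp_all add: E subfield_add subfield_mult c)
    ultimately have "x * y = (u * u' + v * v' * (e * e)) + (u * v' + v * u') * e"
      "u * u' + v * v' * (e * e) \<in> E" "u * v' + v * u' \<in> E" by auto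
    then show ?thesis unfolding adj_def by blast
  qed
  have closed_uminus: "- x \<in> adj E e" if hx: "x \<in> adj E e" for x
  proof -
    obtain u v where "x = u + v * e" "u \<in> E" "v \<in> E"
      using hx unfolding adj_def by blast
    then have "- x = (- u) + (- v) * e" "- u \<in> E" "- v \<in> E"
      by (auto simp: algebra_simps E subfield_uminus)
    then show ?thesis unfolding adj_def by blast
  qed
  have closed_inverse: "inverse x \<in> adj E e" if hx: "x \<in> adj E e" for x
  proof (cases "x = 0")
    case True then show ?thesis using adj_sub[OF E] subfield_0[OF E] by auto
  next
    case x0: False
    obtain u v where x: "x = u + v * e" "u \<in> E" "v \<in> E"
      using hx unfolding adj_def by blast
    define D where "D = u * u - v * v * (e * e)"
    have DE: "D \<in> E" unfolding D_def using x c E by (auto intro!: subfield_diff subfield_mult)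
    have D0: "D \<noteq> 0"
    proof
      assume D: "D = 0"
      show False
      proof (cases "v = 0")
        case True then show False using D x x0 by (simp add: D_def)
      next
        case False
        have "(u / v) * (u / v) = e * e" using D False by (simp add: D_def field_simps)
        then have "e = u / v \<or> e = - (u / v)"
          by (metis minus_mult_minus square_eq_iff)
        then show False using \<open>e \<notin> E\<close> x E by (metis subfield_divide subfield_uminus)
      qed
    qed
    have q: "(u / D) + (- v / D) * e = (u - v * e) / D" using D0 by (simp add: field_simps)
    have "x * (u - v * e) = D" using x by (simp add: D_def algebra_simps)
    then have "x * ((u / D) + (- v / D) * e) = 1" using D0 q by (metis divide_self times_divide_eq_right)
    then have "inverse x = (u / D) + (- v / D) * e"
      by (metis inverse_unique)
    moreover have "u / D \<in> E" "- v / D \<in> E" using x DE E by (auto intro: subfield_divide subfield_uminus)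
    ultimately show ?thesis unfolding adj_def by blast
  qed
  show ?thesis
    unfolding subfield_def
    using adj_sub[OF E, of e] E closed_add closed_mult closed_uminus closed_inverse
    by (auto simp: subfield_0 subfield_1)
qed

lemma sum_two: "a \<noteq> b \<Longrightarrow> (\<Sum>x\<in>{a, b}. f x) = f a + f b"
  by simp

lemma quad_ext_adj:
  assumes E: "subfield E" and c: "e * e \<in> E" and e: "e \<notin> E"
  shows "quad_ext E (adj E e)"
proof -
  have e1: "e \<noteq> 1" using e subfield_1[OF E] by auto
  have "ext_degree_eq E (adj E e) 2"
    unfolding ext_degree_eq_def
  proof (intro exI[of _ "{1, e}"] conjI allI impI ballI)
    show "{1, e} \<subseteq> adj E e" using adj_sub[OF E] adj_gen[OF E] subfield_1[OF E] by auto
    show "finite {1, e}" by simp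
    show "card {1, e} = 2" using e1 by simp
  next
    fix cc b assume h: "(\<forall>b\<in>{1, e}. cc b \<in> E) \<and> (\<Sum>b\<in>{1, e}. cc b * b) = 0" and b: "b \<in> {1, e}"
    then have s: "cc 1 + cc e * e = 0" "cc 1 \<in> E" "cc e \<in> E" using e1 by auto
    have "cc e = 0"
    proof (rule ccontr)
      assume "cc e \<noteq> 0"
      then have "e = - cc 1 / cc e" using s(1) by (simp add: field_simps) (metis add.commute add_eq_0_iff mult.commute)
      then show False using e s E by (metis subfield_divide subfield_uminus)
    qed
    then show "cc b = 0" using s b by auto
  next
    fix x assume "x \<in> adj E e"
    then obtain u v where x: "x = u + v * e" "u \<in> E" "v \<in> E" unfolding adj_def by blast
    show "\<exists>cc. (\<forall>b\<in>{1, e}. cc b \<in> E) \<and> x = (\<Sum>b\<in>{1, e}. cc b * b)"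
      by (rule exI[of _ "\<lambda>b. if b = 1 then u else v"]) (use x e1 in auto)
  qed
  then show ?thesis unfolding quad_ext_def using adj_subfield[OF E c] adj_sub[OF E] E by blast
qed




lemma quad_ext_rep:
  fixes K M :: "'a::field set"
  assumes q: "quad_ext K M" and two: "(2::'a) \<noteq> 0"
  shows "\<exists>r. r \<notin> K \<and> r * r \<in> K \<and> M = adj K r"
proof -
  have K: "subfield K" and Ms: "subfield M" and KM: "K \<subseteq> M" and d: "ext_degree_eq K M 2"
    using q by (auto simp: quad_ext_def)
  obtain B where B: "B \<subseteq> M" "finite B" "card B = 2"
    and I: "\<And>c. (\<forall>b\<in>B. c b \<in> K) \<and> (\<Sum>b\<in>B. c b * b) = 0 \<Longrightarrow> (\<forall>b\<in>B. c b = 0)"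
    and S: "\<And>x. x \<in> M \<Longrightarrow> \<exists>c. (\<forall>b\<in>B. c b \<in> K) \<and> x = (\<Sum>b\<in>B. c b * b)"
    using d unfolding ext_degree_eq_def by blast
  obtain b1 b2 where b12: "B = {b1, b2}" "b1 \<noteq> b2" using B(3) by (meson card_2_iff)
  have S2: "\<exists>m1 m2. m1 \<in> K \<and> m2 \<in> K \<and> x = m1 * b1 + m2 * b2" if "x \<in> M" for x
    using S[OF that] b12 by auto
  obtain z where z: "z \<in> M" "z \<notin> K"
  proof -
    consider "b1 \<notin> K" | "b2 \<notin> K" | "b1 \<in> K \<and> b2 \<in> K" by blast
    then show ?thesis
    proof cases
      case 1 then show ?thesis using that B b12 by auto
    next
      case 2 then show ?thesis using that B b12 by auto
    next
      case 3
      let ?c = "\<lambda>b. if b = b1 then b2 else - b1"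
      have "(\<forall>b\<in>B. ?c b \<in> K) \<and> (\<Sum>b\<in>B. ?c b * b) = 0"
        using 3 b12 K by (auto simp: subfield_uminus)
      then have "\<forall>b\<in>B. ?c b = 0" by (rule I)
      then show ?thesis using b12 by auto
    qed
  qed
  obtain a1 a2 where a: "a1 \<in> K" "a2 \<in> K" "1 = a1 * b1 + a2 * b2" using S2 subfield_1[OF Ms] by blast
  obtain z1 z2 where zz: "z1 \<in> K" "z2 \<in> K" "z = z1 * b1 + z2 * b2" using S2 z(1) by blast
  define D where "D = a1 * z2 - a2 * z1"
  have D0: "D \<noteq> 0"
  proof
    assume D: "D = 0"
    show False
    proof (cases "a1 = 0")
      case False
      have "z - (z1 / a1) * 1 = (D / a1) * b2" unfolding a(3) zz(3) D_def using False
        by (simp add: field_simps)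
      then have "z = z1 / a1" using D by simp
      then show False using z zz a K by (metis subfield_divide)
    next
      case True
      then have "a2 \<noteq> 0" using a by auto
      then have "z1 = 0" using D True by (simp add: D_def)
      then have "z = (z2 / a2) * 1" unfolding a(3) zz(3) using True \<open>a2 \<noteq> 0\<close> by simp
      then show False using z zz a K by (metis subfield_divide mult_1_right)
    qed
  qed
  have Mz: "M = adj K z"
  proof
    show "adj K z \<subseteq> M" using adj_in[OF Ms KM z(1)] .
    show "M \<subseteq> adj K z"
    proof
      fix m assume "m \<in> M"
      then obtain m1 m2 where m: "m1 \<in> K" "m2 \<in> K" "m = m1 * b1 + m2 * b2" using S2 by blast
      define al where "al = (m1 * z2 - m2 * z1) / D"
      define be where "be = (a1 * m2 - a2 * m1) / D"
      have "m = al + be * z"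
      proof -
        have "D * m = (m1 * z2 - m2 * z1) * (a1 * b1 + a2 * b2) + (a1 * m2 - a2 * m1) * z"
          unfolding m(3) zz(3) D_def by (simp add: algebra_simps)
        then have "D * m = D * al + D * be * z" using a(3) D0 by (simp add: al_def be_def)
        then show ?thesis using D0 by (simp add: algebra_simps) (metis distrib_left mult.assoc mult_left_cancel)
      qed
      moreover have "al \<in> K" "be \<in> K" unfolding al_def be_def D_def
        using m zz a K by (auto intro!: subfield_divide subfield_diff subfield_mult)
      ultimately show "m \<in> adj K z" unfolding adj_def by blast
    qed
  qed
  have "z * z \<in> adj K z" using Mz z(1) Ms subfield_mult by blast
  then obtain al be where ab: "al \<in> K" "be \<in> K" "z * z = al + be * z" unfolding adj_def by blast
  define r where "r = z - be / 2"
  have four: "(4::'a) \<noteq> 0" using two by (metis mult_eq_0_iff num_double numeral_times_numeral)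
  have "r * r = z * z - be * z + be * be / 4" unfolding r_def using two four
    by (simp add: field_simps)
  then have "r * r = al + be * be / 4" using ab(3) by simp
  then have rr: "r * r \<in> K" using ab K by (auto intro!: subfield_add subfield_divide subfield_mult subfield_numeral)
  have bK: "be / 2 \<in> K" using ab K by (simp add: subfield_divide subfield_numeral)
  have rK: "r \<notin> K"
  proof
    assume "r \<in> K" then have "z \<in> K" unfolding r_def using bK K by (metis diff_add_cancel subfield_add)
    then show False using z by simp
  qed
  have "adj K r = adj K z"
  proof
    show "adj K r \<subseteq> adj K z" using adj_in[OF Ms KM] Mz rK
      by (metis KM Ms adj_gen adj_in r_def bK in_mono subfield_diff z(1) K)
    show "adj K z \<subseteq> adj K r"
    proof -
      have "z \<in> adj K r" using adj_gen[OF K, of r] adj_sub[OF K, of r] bK adj_subfield[OF K rr]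
        unfolding r_def by (metis diff_add_cancel r_def subfield_add subsetD)
      then show ?thesis using adj_in[OF adj_subfield[OF K rr] adj_sub[OF K]] by blast
    qed
  qed
  then show ?thesis using rK rr Mz by auto
qed




definition cin :: "'a::field set \<Rightarrow> 'a poly \<Rightarrow> bool" where
  "cin K p \<longleftrightarrow> (\<forall>i. coeff p i \<in> K)"

lemma cin_mult: "subfield K \<Longrightarrow> cin K p \<Longrightarrow> cin K q \<Longrightarrow> cin K (p * q)"
  unfolding cin_def coeff_mult by (auto intro!: subfield_sum subfield_mult)
lemma cin_diff: "subfield K \<Longrightarrow> cin K p \<Longrightarrow> cin K q \<Longrightarrow> cin K (p - q)"
  unfolding cin_def by (auto intro!: subfield_diff)
lemma cin_smult: "subfield K \<Longrightarrow> a \<in> K \<Longrightarrow> cin K p \<Longrightarrow> cin K (smult a p)"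
  unfolding cin_def by (auto intro!: subfield_mult)
lemma cin_mono: "K \<subseteq> K' \<Longrightarrow> cin K p \<Longrightarrow> cin K' p"
  unfolding cin_def by auto

lemma coeff_sum_monom: "coeff (\<Sum>i\<le>d. monom (U i) i) n = (if n \<le> d then U n else 0)"
  by (simp add: coeff_sum coeff_monom)

lemma norm_step:
  assumes E: "subfield E" and c: "e * e \<in> E" and e: "e \<notin> E"
    and p0: "p \<noteq> 0" and pc: "cin (adj E e) p"
  shows "\<exists>N. N \<noteq> 0 \<and> cin E N \<and> (\<forall>z. poly p z = 0 \<longrightarrow> poly N z = 0)"
proof -
  have "\<forall>i. \<exists>uv. fst uv \<in> E \<and> snd uv \<in> E \<and> coeff p i = fst uv + snd uv * e"
    using pc unfolding cin_def adj_def by force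
  then obtain W where W: "\<And>i. fst (W i) \<in> E \<and> snd (W i) \<in> E \<and> coeff p i = fst (W i) + snd (W i) * e"
    by metis
  define U where "U i = fst (W i)" for i
  define V where "V i = snd (W i)" for i
  define q0 where "q0 = (\<Sum>i\<le>degree p. monom (U i) i)"
  define q1 where "q1 = (\<Sum>i\<le>degree p. monom (V i) i)"
  have c0: "coeff q0 n = (if n \<le> degree p then U n else 0)" for n unfolding q0_def by (rule coeff_sum_monom)
  have c1: "coeff q1 n = (if n \<le> degree p then V n else 0)" for n unfolding q1_def by (rule coeff_sum_monom)
  have q0E: "cin E q0" using c0 W E unfolding cin_def U_def by (auto simp: subfield_0)
  have q1E: "cin E q1" using c1 W E unfolding cin_def V_def by (auto simp: subfield_0)
  have peq: "p = q0 + smult e q1"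
  proof (rule poly_eqI)
    fix n show "coeff p n = coeff (q0 + smult e q1) n"
      using W[of n] c0 c1 by (auto simp: U_def V_def coeff_eq_0 mult.commute)
  qed
  define pb where "pb = q0 - smult e q1"
  have pb0: "pb \<noteq> 0"
  proof
    assume "pb = 0"
    then have q01: "q0 = smult e q1" unfolding pb_def by simp
    show False
    proof (cases "q1 = 0")
      case True then show False using q01 peq p0 by simp
    next
      case False
      then obtain n where n: "coeff q1 n \<noteq> 0" by (meson leading_coeff_0_iff)
      have "coeff q0 n = e * coeff q1 n" using q01 by simp
      then have "e = coeff q0 n / coeff q1 n" using n by simp
      then show False using e q0E q1E E unfolding cin_def by (metis subfield_divide)
    qed
  qed
  define N where "N = p * pb"
  have N: "N = q0 * q0 - smult (e * e) (q1 * q1)"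
    unfolding N_def pb_def peq by (simp add: algebra_simps mult_smult_left mult_smult_right)
  have "N \<noteq> 0" unfolding N_def using p0 pb0 by simp
  moreover have "cin E N" unfolding N using q0E q1E E c by (intro cin_diff cin_mult cin_smult) auto
  moreover have "\<forall>z. poly p z = 0 \<longrightarrow> poly N z = 0" unfolding N_def by simp
  ultimately show ?thesis by blast
qed

locale qc =
  fixes F :: "'a::field set"
  assumes two: "(2::'a) \<noteq> 0" and QC: "is_quadratic_closure F"
begin

lemma F_sub: "subfield F" using QC by (simp add: is_quadratic_closure_def)
lemma sqrt_ex: "\<exists>y. y * y = (x::'a)" using QC unfolding is_quadratic_closure_def by blast
lemma minimal: "subfield E \<Longrightarrow> F \<subseteq> E \<Longrightarrow> (\<And>x. x \<in> E \<Longrightarrow> \<exists>y\<in>E. y * y = x) \<Longrightarrow> E = UNIV"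
  using QC unfolding is_quadratic_closure_def by blast

inductive tw :: "'a set \<Rightarrow> bool" where
  tw_base: "tw F"
| tw_step: "tw E \<Longrightarrow> e * e \<in> E \<Longrightarrow> tw (adj E e)"

lemma tw_sub: "tw E \<Longrightarrow> subfield E \<and> F \<subseteq> E"
  by (induction rule: tw.induct) (use F_sub adj_subfield adj_sub in blast)+

lemma tw_join: "tw E2 \<Longrightarrow> tw E1 \<Longrightarrow> \<exists>E3. tw E3 \<and> E1 \<subseteq> E3 \<and> E2 \<subseteq> E3"
proof (induction E2 arbitrary: E1 rule: tw.induct)
  case tw_base then show ?case using tw_sub by blast
next
  case (tw_step E e)
  then obtain E3 where E3: "tw E3" "E1 \<subseteq> E3" "E \<subseteq> E3" by blast
  have "tw (adj E3 e)" using E3 tw_step by (blast intro: tw.tw_step)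
  moreover have "E1 \<subseteq> adj E3 e" using E3 adj_sub tw_sub by blast
  moreover have "adj E e \<subseteq> adj E3 e" using E3 adj_mono by blast
  ultimately show ?case by blast
qed

lemma tw_all: "\<exists>E. tw E \<and> x \<in> E"
proof -
  let ?T = "\<Union>{E. tw E}"
  have two_in: "\<exists>E. tw E \<and> x \<in> E \<and> y \<in> E" if hx: "x \<in> ?T" and hy: "y \<in> ?T" for x y
  proof -
    obtain E1 E2 where "tw E1" "tw E2" "x \<in> E1" "y \<in> E2" using hx hy by blast
    then show ?thesis using tw_join by blast
  qed
  have "subfield ?T"
    unfolding subfield_def
  proof (intro conjI ballI)
    show "0 \<in> ?T" "1 \<in> ?T" using tw_base F_sub subfield_0 subfield_1 by blast+
  next
    fix x y assume "x \<in> ?T" "y \<in> ?T"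
    then obtain E where "tw E" "x \<in> E" "y \<in> E" using two_in by blast
    then show "x + y \<in> ?T" "x * y \<in> ?T" using tw_sub subfield_add subfield_mult by blast+
  next
    fix x assume "x \<in> ?T"
    then obtain E where "tw E" "x \<in> E" by blast
    then show "- x \<in> ?T" "inverse x \<in> ?T" using tw_sub subfield_uminus subfield_inverse by blast+
  qed
  moreover have "F \<subseteq> ?T" using tw_base by blast
  moreover have "\<exists>y\<in>?T. y * y = x" if hx: "x \<in> ?T" for x
  proof -
    obtain E where E: "tw E" "x \<in> E" using hx by blast
    obtain y where y: "y * y = x" using sqrt_ex by blast
    have "tw (adj E y)" using E y tw_step by simp
    moreover have "y \<in> adj E y" using adj_gen tw_sub E by blast
    ultimately show ?thesis using y by blast
  qed
  ultimately have "?T = UNIV" by (rule minimal)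
  then show ?thesis by blast
qed

lemma tw_norm: "tw E \<Longrightarrow> p \<noteq> 0 \<Longrightarrow> cin E p \<Longrightarrow> \<exists>q. q \<noteq> 0 \<and> cin F q \<and> (\<forall>z. poly p z = 0 \<longrightarrow> poly q z = 0)"
proof (induction E arbitrary: p rule: tw.induct)
  case tw_base then show ?case by blast
next
  case (tw_step E e)
  have E: "subfield E" using tw_step tw_sub by blast
  show ?case
  proof (cases "e \<in> E")
    case True then show ?thesis using tw_step adj_triv[OF E] by simp
  next
    case False
    obtain N where N: "N \<noteq> 0" "cin E N" "\<forall>z. poly p z = 0 \<longrightarrow> poly N z = 0"
      using norm_step[OF E tw_step(2) False tw_step(4) tw_step(5)] by blast
    then show ?thesis using tw_step(3)[OF N(1) N(2)] by blast
  qed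
qed

lemma algebraic: "\<exists>q. q \<noteq> 0 \<and> cin F q \<and> poly q x = 0"
proof -
  obtain E where E: "tw E" "x \<in> E" using tw_all by blast
  have "cin E [:-x, 1:]" using E tw_sub unfolding cin_def
    by (auto simp: coeff_pCons split: nat.split intro: subfield_uminus subfield_1 subfield_0)
  then obtain q where "q \<noteq> 0" "cin F q" "\<forall>z. poly [:-x, 1:] z = 0 \<longrightarrow> poly q z = 0"
    using tw_norm[OF E(1), of "[:-x, 1:]"] by auto
  then show ?thesis by auto
qed

end



context qc begin

definition emb :: "'a set \<Rightarrow> ('a \<Rightarrow> 'a) \<Rightarrow> bool" where
  "emb E f \<longleftrightarrow> subfield E \<and> F \<subseteq> E \<and> (\<forall>x\<in>F. f x = x) \<and>
     (\<forall>x\<in>E. \<forall>y\<in>E. f (x + y) = f x + f y \<and> f (x * y) = f x * f y)"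

lemma emb_zero: assumes "emb E f" shows "f 0 = 0"
proof -
  have "0 \<in> F" using F_sub subfield_0 by blast
  then show ?thesis using assms by (auto simp: emb_def)
qed

definition rep :: "'a set \<Rightarrow> 'a \<Rightarrow> 'a \<Rightarrow> 'a \<times> 'a" where
  "rep E e x = (SOME uv. fst uv \<in> E \<and> snd uv \<in> E \<and> x = fst uv + snd uv * e)"

lemma rep_eq:
  assumes E: "subfield E" and e: "e \<notin> E" and uv: "u \<in> E" "v \<in> E"
  shows "rep E e (u + v * e) = (u, v)"
proof -
  let ?P = "\<lambda>uv. fst uv \<in> E \<and> snd uv \<in> E \<and> u + v * e = fst uv + snd uv * e"
  have "?P (u, v)" using uv by simp
  then have "?P (rep E e (u + v * e))" unfolding rep_def by (rule someI)
  then show ?thesis using adj_unique[OF E e uv] by (metis prod.collapse)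
qed

definition ext1 :: "'a set \<Rightarrow> ('a \<Rightarrow> 'a) \<Rightarrow> 'a \<Rightarrow> 'a \<Rightarrow> 'a \<Rightarrow> 'a" where
  "ext1 E f e e' x = f (fst (rep E e x)) + f (snd (rep E e x)) * e'"

lemma ext1_val:
  assumes E: "subfield E" and e: "e \<notin> E" and uv: "u \<in> E" "v \<in> E"
  shows "ext1 E f e e' (u + v * e) = f u + f v * e'"
  using rep_eq[OF E e uv] by (simp add: ext1_def)

lemma ext1_emb:
  assumes em: "emb E f" and c: "e * e \<in> E" and e: "e \<notin> E" and e': "e' * e' = f (e * e)"
  shows "emb (adj E e) (ext1 E f e e') \<and> (\<forall>x\<in>E. ext1 E f e e' x = f x)"
proof -
  have E: "subfield E" using em by (simp add: emb_def)
  have f0: "f 0 = 0" by (rule emb_zero[OF em])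
  have agree: "ext1 E f e e' x = f x" if "x \<in> E" for x
    using ext1_val[OF E e that subfield_0[OF E], of f e'] f0 by simp
  have fa: "f (x + y) = f x + f y" "f (x * y) = f x * f y" if "x \<in> E" "y \<in> E" for x y
    using em that by (auto simp: emb_def)
  have hom2: "ext1 E f e e' (x + y) = ext1 E f e e' x + ext1 E f e e' y \<and>
              ext1 E f e e' (x * y) = ext1 E f e e' x * ext1 E f e e' y"
    if hx: "x \<in> adj E e" and hy: "y \<in> adj E e" for x y
  proof -
    obtain u v u' v' where uv: "x = u + v * e" "y = u' + v' * e" "u \<in> E" "v \<in> E" "u' \<in> E" "v' \<in> E"
      using hx hy unfolding adj_def by blast
    have s: "x + y = (u + u') + (v + v') * e" using uv by (simp add: algebra_simps)
    have m: "x * y = (u * u' + v * v' * (e * e)) + (u * v' + v * u') * e" using uv by (simp add: algebra_simps)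
    have in1: "u + u' \<in> E" "v + v' \<in> E" using uv E by (auto intro: subfield_add)
    have in2: "u * u' + v * v' * (e * e) \<in> E" "u * v' + v * u' \<in> E" using uv E c
      by (auto intro!: subfield_add subfield_mult)
    have "ext1 E f e e' (x + y) = f (u + u') + f (v + v') * e'"
      unfolding s by (rule ext1_val[OF E e in1])
    also have "\<dots> = ext1 E f e e' x + ext1 E f e e' y"
      unfolding uv(1,2) ext1_val[OF E e uv(3,4)] ext1_val[OF E e uv(5,6)]
      using fa uv by (simp add: algebra_simps)
    finally have A: "ext1 E f e e' (x + y) = ext1 E f e e' x + ext1 E f e e' y" .
    have "ext1 E f e e' (x * y) = f (u * u' + v * v' * (e * e)) + f (u * v' + v * u') * e'"
      unfolding m by (rule ext1_val[OF E e in2])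
    also have "\<dots> = (f u * f u' + f v * f v' * (e' * e')) + (f u * f v' + f v * f u') * e'"
      using fa uv E c e' by (simp add: subfield_mult)
    also have "\<dots> = ext1 E f e e' x * ext1 E f e e' y"
      unfolding uv(1,2) ext1_val[OF E e uv(3,4)] ext1_val[OF E e uv(5,6)]
      by (simp add: algebra_simps)
    finally show ?thesis using A by simp
  qed
  have "emb (adj E e) (ext1 E f e e')"
    unfolding emb_def using adj_subfield[OF E c] adj_sub[OF E, of e] em agree hom2
    by (auto simp: emb_def)
  then show ?thesis using agree by blast
qed

definition gr :: "'a set \<Rightarrow> ('a \<Rightarrow> 'a) \<Rightarrow> ('a \<times> 'a) set" where
  "gr E f = (\<lambda>x. (x, f x)) ` E"

lemma gr_iff: "(x, y) \<in> gr E f \<longleftrightarrow> x \<in> E \<and> y = f x"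
  unfolding gr_def by auto

lemma gr_sub: "gr E f \<subseteq> gr E' f' \<longleftrightarrow> E \<subseteq> E' \<and> (\<forall>x\<in>E. f' x = f x)"
  unfolding gr_def by auto

lemma extension:
  assumes em0: "emb E0 f0"
  shows "\<exists>s. autK F s \<and> (\<forall>x\<in>E0. s x = f0 x)"
proof -
  define A where "A = {R. \<exists>E f. emb E f \<and> E0 \<subseteq> E \<and> (\<forall>x\<in>E0. f x = f0 x) \<and> R = gr E f}"
  have "\<exists>M\<in>A. \<forall>X\<in>A. M \<subseteq> X \<longrightarrow> X = M"
  proof (rule Zorn_Lemma2, intro ballI)
    fix C assume C: "C \<in> chains A"
    show "\<exists>U\<in>A. \<forall>X\<in>C. X \<subseteq> U"
    proof (cases "C = {}")
      case True
      have "gr E0 f0 \<in> A" unfolding A_def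
        by (intro CollectI exI[of _ E0] exI[of _ f0]) (simp add: em0)
      then show ?thesis using True by blast
    next
      case False
      have CA: "C \<subseteq> A" and ch: "\<And>X Y. X \<in> C \<Longrightarrow> Y \<in> C \<Longrightarrow> X \<subseteq> Y \<or> Y \<subseteq> X"
        using C unfolding chains_def chain_subset_def by blast+
      let ?U = "\<Union>C"
      define E where "E = fst ` ?U"
      define f where "f x = (THE y. (x, y) \<in> ?U)" for x
      have memA: "\<exists>E' f'. emb E' f' \<and> E0 \<subseteq> E' \<and> (\<forall>x\<in>E0. f' x = f0 x) \<and> R = gr E' f'" if "R \<in> C" for R
        using CA that unfolding A_def by blast
      have func: "y1 = y2" if h1: "(x, y1) \<in> ?U" and h2: "(x, y2) \<in> ?U" for x y1 y2
      proof -
        obtain R1 R2 where R: "R1 \<in> C" "R2 \<in> C" "(x, y1) \<in> R1" "(x, y2) \<in> R2" using h1 h2 by blast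
        then obtain R where "R \<in> C" "(x, y1) \<in> R" "(x, y2) \<in> R" using ch[OF R(1,2)] by blast
        then obtain E' f' where "R = gr E' f'" using memA by blast
        then show ?thesis using \<open>(x, y1) \<in> R\<close> \<open>(x, y2) \<in> R\<close> by (simp add: gr_iff)
      qed
      have fval: "f x = y" if "(x, y) \<in> ?U" for x y
        unfolding f_def by (rule the_equality) (use that func in blast)+
      have two_in: "\<exists>R\<in>C. \<exists>E' f'. emb E' f' \<and> R = gr E' f' \<and> x \<in> E' \<and> y \<in> E' \<and> (\<forall>z\<in>E'. f z = f' z)"
        if hx: "x \<in> E" and hy: "y \<in> E" for x y
      proof -
        obtain p1 where p1: "p1 \<in> ?U" "x = fst p1" using hx unfolding E_def by blast
        obtain p2 where p2: "p2 \<in> ?U" "y = fst p2" using hy unfolding E_def by blast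
        obtain R1 R2 where R: "R1 \<in> C" "R2 \<in> C" "(x, snd p1) \<in> R1" "(y, snd p2) \<in> R2"
          using p1 p2 by auto
        then obtain R where RC: "R \<in> C" "(x, snd p1) \<in> R" "(y, snd p2) \<in> R" using ch[OF R(1,2)] by blast
        obtain E' f' where E': "emb E' f'" "R = gr E' f'" using memA[OF RC(1)] by blast
        have "\<forall>z\<in>E'. f z = f' z"
        proof
          fix z assume "z \<in> E'"
          then have "(z, f' z) \<in> R" using E'(2) by (simp add: gr_iff)
          then have "(z, f' z) \<in> ?U" using RC(1) by blast
          then show "f z = f' z" by (rule fval)
        qed
        moreover have "x \<in> E'" "y \<in> E'" using RC(2,3) E'(2) by (simp_all add: gr_iff)
        ultimately show ?thesis using RC(1) E' by blast
      qed
      obtain R0 where R0: "R0 \<in> C" using False by blast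
      obtain E1 f1 where E1: "emb E1 f1" "E0 \<subseteq> E1" "\<forall>x\<in>E0. f1 x = f0 x" "R0 = gr E1 f1" using memA[OF R0] by blast
      have E1U: "(z, f1 z) \<in> ?U" if "z \<in> E1" for z
        using R0 E1(4) that by (auto simp: gr_iff)
      have E1E: "E1 \<subseteq> E"
      proof
        fix z assume "z \<in> E1"
        then have "(z, f1 z) \<in> ?U" by (rule E1U)
        then show "z \<in> E" unfolding E_def by (metis fst_conv image_eqI)
      qed
      have E0E: "E0 \<subseteq> E" using E1 E1E by blast
      have FE: "F \<subseteq> E" using E1 E1E by (auto simp: emb_def)
      have fE0: "\<forall>x\<in>E0. f x = f0 x"
      proof
        fix x assume "x \<in> E0"
        then have "x \<in> E1" using E1(2) by blast
        then have "f x = f1 x" using E1U fval by blast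
        then show "f x = f0 x" using E1(3) \<open>x \<in> E0\<close> by simp
      qed
      have "emb E f"
        unfolding emb_def
      proof (intro conjI ballI)
        show "F \<subseteq> E" by (rule FE)
      next
        fix x assume "x \<in> F"
        then have "x \<in> E1" using E1 by (auto simp: emb_def)
        then have "f x = f1 x" using E1 R0 fval gr_iff by blast
        then show "f x = x" using E1 \<open>x \<in> F\<close> by (auto simp: emb_def)
      next
        fix x y assume "x \<in> E" "y \<in> E"
        then obtain R E' f' where R: "R \<in> C" "emb E' f'" "R = gr E' f'" "x \<in> E'" "y \<in> E'" "\<forall>z\<in>E'. f z = f' z"
          using two_in by blast
        have "x + y \<in> E'" "x * y \<in> E'" using R by (auto simp: emb_def subfield_add subfield_mult)
        then show "f (x + y) = f x + f y" "f (x * y) = f x * f y" using R by (auto simp: emb_def)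
      next
        show "subfield E"
          unfolding subfield_def
        proof (intro conjI ballI)
          show "0 \<in> E" "1 \<in> E" using FE F_sub subfield_0 subfield_1 by blast+
        next
          fix x y assume "x \<in> E" "y \<in> E"
          then obtain R E' f' where R: "R \<in> C" "emb E' f'" "R = gr E' f'" "x \<in> E'" "y \<in> E'"
            using two_in by blast
          have "x + y \<in> E'" "x * y \<in> E'" "- x \<in> E'" "inverse x \<in> E'" using R
            by (auto simp: emb_def subfield_add subfield_mult subfield_uminus subfield_inverse)
          moreover have "E' \<subseteq> E"
          proof
            fix z assume "z \<in> E'"
            then have "(z, f' z) \<in> R" using R(3) by (simp add: gr_iff)
            then have "(z, f' z) \<in> ?U" using R(1) by blast
            then show "z \<in> E" unfolding E_def by (metis fst_conv image_eqI)
          qed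
          ultimately show "x + y \<in> E" "x * y \<in> E" "- x \<in> E" "inverse x \<in> E" by blast+
        qed
      qed
      moreover have "?U = gr E f"
      proof
        show "?U \<subseteq> gr E f"
        proof
          fix p assume p: "p \<in> ?U"
          then have "(fst p, snd p) \<in> ?U" by simp
          then have "f (fst p) = snd p" by (rule fval)
          moreover have "fst p \<in> E" unfolding E_def using p by blast
          ultimately show "p \<in> gr E f" by (metis gr_iff prod.collapse)
        qed
        show "gr E f \<subseteq> ?U"
        proof
          fix p assume "p \<in> gr E f"
          then obtain x where x: "x \<in> E" "p = (x, f x)" unfolding gr_def by blast
          then obtain q where q: "q \<in> ?U" "x = fst q" unfolding E_def by blast
          then have "(x, snd q) \<in> ?U" by simp
          then have "f x = snd q" by (rule fval)
          then show "p \<in> ?U" using x q by simp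
        qed
      qed
      ultimately have "?U \<in> A" unfolding A_def
        by (intro CollectI exI[of _ E] exI[of _ f]) (use E0E fE0 in blast)
      then show ?thesis by blast
    qed
  qed
  then obtain M where MA: "M \<in> A" and Mmax: "\<And>X. X \<in> A \<Longrightarrow> M \<subseteq> X \<Longrightarrow> X = M" by blast
  then obtain E f where Ef: "emb E f" "E0 \<subseteq> E" "\<forall>x\<in>E0. f x = f0 x" "M = gr E f"
    unfolding A_def by blast
  have Es: "subfield E" "F \<subseteq> E" using Ef by (auto simp: emb_def)
  have EU: "E = UNIV"
  proof (rule ccontr)
    assume "E \<noteq> UNIV"
    then have "\<not> (\<forall>x\<in>E. \<exists>y\<in>E. y * y = x)" using minimal[OF Es] by blast
    then obtain c where c: "c \<in> E" "\<not> (\<exists>y\<in>E. y * y = c)" by blast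
    obtain e where e: "e * e = c" using sqrt_ex by blast
    obtain e' where e': "e' * e' = f c" using sqrt_ex by blast
    have eE: "e \<notin> E" using c e by blast
    have X: "emb (adj E e) (ext1 E f e e') \<and> (\<forall>x\<in>E. ext1 E f e e' x = f x)"
      using ext1_emb[OF Ef(1)] c e e' eE by simp
    have Y1: "E0 \<subseteq> adj E e" using Ef(2) adj_sub[OF Es(1), of e] by blast
    have Y2: "\<forall>x\<in>E0. ext1 E f e e' x = f0 x" using X Ef(2,3) by auto
    have "gr (adj E e) (ext1 E f e e') \<in> A"
      unfolding A_def by (intro CollectI exI[of _ "adj E e"] exI[of _ "ext1 E f e e'"]) (use X Y1 Y2 in auto)
    moreover have "M \<subseteq> gr (adj E e) (ext1 E f e e')"
      unfolding Ef(4) gr_sub using X adj_sub[OF Es(1)] by auto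
    ultimately have eq: "gr (adj E e) (ext1 E f e e') = M" by (rule Mmax)
    have "(e, ext1 E f e e' e) \<in> gr (adj E e) (ext1 E f e e')"
      using adj_gen[OF Es(1)] by (simp add: gr_iff)
    then have "(e, ext1 E f e e' e) \<in> gr E f" using eq Ef(4) by simp
    then show False using eE by (simp add: gr_iff)
  qed
  have fF: "\<forall>x\<in>F. f x = x" using Ef by (simp add: emb_def)
  have f1: "f 1 = 1" using fF F_sub subfield_1 by blast
  have "\<forall>x\<in>E. \<forall>y\<in>E. f (x + y) = f x + f y \<and> f (x * y) = f x * f y" using Ef(1) by (simp add: emb_def)
  then have h: "hom f"
    unfolding hom_def using EU f1 by simp
  have "range f = UNIV"
  proof (rule minimal)
    show "subfield (range f)"
      unfolding subfield_def
    proof (intro conjI ballI)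
      show "0 \<in> range f" using hom_zero[OF h] by (metis rangeI)
      show "1 \<in> range f" using hom_one[OF h] by (metis rangeI)
    next
      fix x y assume "x \<in> range f" "y \<in> range f"
      then obtain a b where ab: "x = f a" "y = f b" by blast
      show "x + y \<in> range f" using hom_add[OF h, of a b] ab by (metis rangeI)
      show "x * y \<in> range f" using hom_mult[OF h, of a b] ab by (metis rangeI)
    next
      fix x assume "x \<in> range f"
      then obtain a where ab: "x = f a" by blast
      show "- x \<in> range f" using hom_uminus[OF h, of a] ab by (metis rangeI)
      show "inverse x \<in> range f" using hom_inverse[OF h, of a] ab by (metis rangeI)
    qed
    show "F \<subseteq> range f"
    proof
      fix x assume "x \<in> F"
      then have "x = f x" using fF by simp
      then show "x \<in> range f" by (rule image_eqI) simp
    qed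
    fix x assume "x \<in> range f"
    then obtain z where z: "x = f z" by blast
    obtain y where yz: "y * y = z" using sqrt_ex by blast
    have "f y * f y = x" using z hom_mult[OF h, of y y] yz by simp
    then show "\<exists>y\<in>range f. y * y = x" by blast
  qed
  then have "bij f" using hom_inj[OF h] by (simp add: bij_def)
  then have "autK F f" using h fF by (simp add: autK_def)
  then show ?thesis using Ef(3) by blast
qed

lemma fixed_field:
  assumes "\<And>s. autK F s \<Longrightarrow> s y = y"
  shows "y \<in> F"
proof -
  have "tw E \<Longrightarrow> y \<in> E \<Longrightarrow> y \<notin> F \<Longrightarrow> \<exists>s. autK F s \<and> s y \<noteq> y" for E
  proof (induction E rule: tw.induct)
    case tw_base then show ?case by simp
  next
    case (tw_step E e)
    have E: "subfield E" "F \<subseteq> E" using tw_step tw_sub by blast+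
    show ?case
    proof (cases "e \<in> E \<or> y \<in> E")
      case True then show ?thesis using tw_step adj_triv[OF E(1)] by auto
    next
      case False
      then have eE: "e \<notin> E" and yE: "y \<notin> E" by auto
      obtain u v where uv: "y = u + v * e" "u \<in> E" "v \<in> E" using tw_step(4) unfolding adj_def by blast
      have v0: "v \<noteq> 0" using uv yE by auto
      have e0: "e \<noteq> 0" using eE subfield_0[OF E(1)] by auto
      have em: "emb E id" unfolding emb_def using E by simp
      have "(- e) * (- e) = id (e * e)" by simp
      then have X: "emb (adj E e) (ext1 E id e (- e))"
        using ext1_emb[OF em tw_step(2) eE] by blast
      obtain s where s: "autK F s" "\<forall>x\<in>adj E e. s x = ext1 E id e (- e) x"
        using extension[OF X] by blast
      have "s y = u - v * e" using s(2) tw_step(4) ext1_val[OF E(1) eE uv(2,3)] uv(1) by simp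
      moreover have "u - v * e \<noteq> u + v * e"
      proof
        assume "u - v * e = u + v * e"
        then have "2 * (v * e) = 0" by (simp add: algebra_simps)
        then show False using two v0 e0 by simp
      qed
      ultimately show ?thesis using s uv by auto
    qed
  qed
  then show ?thesis using tw_all assms by blast
qed

end



lemma poly_hom:
  assumes h: "hom s" and c: "\<And>i. s (coeff p i) = coeff p i"
  shows "poly p (s x) = s (poly p x)"
  unfolding poly_altdef hom_sum[OF h] hom_mult[OF h] hom_power[OF h] c by simp

lemma galois_stable:
  assumes g: "galois K M" and a: "autK K s" and x: "x \<in> M"
  shows "s x \<in> M"
proof -
  obtain p where p: "min_poly_over K x p" "card {r \<in> M. poly p r = 0} = degree p"
    using g x unfolding galois_def by blast
  have p0: "p \<noteq> 0" and pc: "\<forall>i. coeff p i \<in> K" and px: "poly p x = 0"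
    using p(1) unfolding min_poly_over_def by auto
  have h: "hom s" and fx: "\<forall>y\<in>K. s y = y" using a unfolding autK_def by auto
  have "poly p (s x) = s (poly p x)" using poly_hom[OF h] pc fx by simp
  then have sx: "poly p (s x) = 0" using px hom_zero[OF h] by simp
  have fin: "finite {r. poly p r = 0}" using poly_roots_finite[OF p0] .
  have "{r \<in> M. poly p r = 0} = {r. poly p r = 0}"
  proof (rule card_subset_eq[OF fin])
    show "{r \<in> M. poly p r = 0} \<subseteq> {r. poly p r = 0}" by blast
    show "card {r \<in> M. poly p r = 0} = card {r. poly p r = 0}"
    proof -
      have "card {r \<in> M. poly p r = 0} \<le> card {r. poly p r = 0}" by (rule card_mono[OF fin]) blast
      then show ?thesis using p(2) card_poly_roots_bound[OF p0] by linarith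
    qed
  qed
  then show ?thesis using sx by blast
qed

lemma qpow_stable:
  assumes a: "autK K s"
  shows "x \<in> qpow K n \<Longrightarrow> s x \<in> qpow K n"
proof (induction n arbitrary: x)
  case 0 then show ?case using a by (simp add: autK_def)
next
  case (Suc n)
  show ?case
  proof (cases n)
    case 0 then show ?thesis using a Suc by (simp add: autK_def)
  next
    case (Suc m)
    have h: "hom s" using a by (simp add: autK_def)
    have "\<And>y. y \<in> qpow K n \<union> \<Union>{L. quad_ext (qpow K n) L \<and> galois K L} \<Longrightarrow>
       s y \<in> qpow K n \<union> \<Union>{L. quad_ext (qpow K n) L \<and> galois K L}"
      using Suc.IH galois_stable[OF _ a] by blast
    then show ?thesis using gen_field_stable[OF h] Suc.prems unfolding Suc qpow_SS by blast
  qed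
qed




lemma coeff_lin_mult: fixes P :: "'a::field poly" shows "coeff ([:c, 1:] * P) n = c * coeff P n + (case n of 0 \<Rightarrow> 0 | Suc m \<Rightarrow> coeff P m)"
proof -
  have "[:c, 1:] * P = smult c P + pCons 0 P" by (simp add: mult_pCons_left smult_1_left)
  then show ?thesis by (simp add: coeff_pCons split: nat.split)
qed

lemma coeff_prod_hom:
  assumes h: "hom s" and fin: "finite S"
  shows "s (coeff (\<Prod>t\<in>S. [:- t, 1:]) n) = coeff (\<Prod>t\<in>S. [:- s t, 1:]) n"
  using fin
proof (induction S arbitrary: n rule: finite_induct)
  case empty then show ?case by (cases n) (simp_all add: hom_one[OF h] hom_zero[OF h])
next
  case (insert a S)
  have "s (coeff (\<Prod>t\<in>insert a S. [:- t, 1:]) n) = s (coeff ([:- a, 1:] * (\<Prod>t\<in>S. [:- t, 1:])) n)"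
    using insert by simp
  also have "\<dots> = coeff ([:- s a, 1:] * (\<Prod>t\<in>S. [:- s t, 1:])) n"
    unfolding coeff_lin_mult
    by (cases n) (simp_all add: hom_add[OF h] hom_mult[OF h] hom_uminus[OF h] hom_zero[OF h] hom_diff[OF h] insert.IH)
  also have "\<dots> = coeff (\<Prod>t\<in>insert a S. [:- s t, 1:]) n" using insert by simp
  finally show ?case .
qed

context qc begin

lemma galois_of_stable:
  assumes M: "subfield M" "F \<subseteq> M" and st: "\<And>s x. autK F s \<Longrightarrow> x \<in> M \<Longrightarrow> s x \<in> M"
  shows "galois F M"
  unfolding galois_def
proof (intro conjI ballI)
  show "subfield F" by (rule F_sub)
  show "subfield M" "F \<subseteq> M" using M by auto
next
  fix x assume xM: "x \<in> M"
  define Orb where "Orb = (\<lambda>s. s x) ` {s. autK F s}"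
  obtain q0 where q0: "q0 \<noteq> 0" "cin F q0" "poly q0 x = 0" using algebraic by blast
  have ev: "poly p (s x) = 0" if "autK F s" "cin F p" "poly p x = 0" for s p
  proof -
    have h: "hom s" using that by (simp add: autK_def)
    have "poly p (s x) = s (poly p x)"
      using that poly_hom[OF h] unfolding autK_def cin_def by simp
    then show ?thesis using that hom_zero[OF h] by simp
  qed
  have Oroots: "Orb \<subseteq> {z. poly p z = 0}" if "cin F p" "poly p x = 0" for p
    unfolding Orb_def using ev that by blast
  have finO: "finite Orb" using Oroots[OF q0(2,3)] poly_roots_finite[OF q0(1)] finite_subset by blast
  have xO: "x \<in> Orb" unfolding Orb_def using autK_id[of F] by (metis (mono_tags) CollectI id_apply image_eqI)
  have OM: "Orb \<subseteq> M" unfolding Orb_def using st xM by blast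
  have sO: "s ` Orb = Orb" if a: "autK F s" for s
  proof -
    have "s ` Orb \<subseteq> Orb" unfolding Orb_def using autK_comp[OF a] by (auto simp: image_iff) (metis comp_apply)
    moreover have "inj s" using a by (simp add: autK_def bij_is_inj)
    ultimately show ?thesis using finO by (metis card_image card_subset_eq finite_imageI inj_on_subset subset_UNIV)
  qed
  define q where "q = (\<Prod>t\<in>Orb. [:- t, 1:])"
  have qF: "cin F q"
    unfolding cin_def
  proof
    fix i
    show "coeff q i \<in> F"
    proof (rule fixed_field)
      fix s assume a: "autK F s"
      have h: "hom s" and inj: "inj s" using a by (auto simp: autK_def bij_is_inj)
      have "s (coeff q i) = coeff (\<Prod>t\<in>Orb. [:- s t, 1:]) i"
        unfolding q_def by (rule coeff_prod_hom[OF h finO])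
      also have "(\<Prod>t\<in>Orb. [:- s t, 1:]) = (\<Prod>t\<in>s ` Orb. [:- t, 1:])"
        using prod.reindex[of s Orb "\<lambda>t. [:- t, 1:]"] inj inj_on_subset by (simp add: inj_on_def)
      also have "\<dots> = q" unfolding q_def sO[OF a] ..
      finally show "s (coeff q i) = coeff q i" .
    qed
  qed
  have lc: "lead_coeff q = 1" unfolding q_def lead_coeff_prod by simp
  then have q0': "q \<noteq> 0" by auto
  have dq: "degree q = card Orb"
    unfolding q_def by (subst degree_prod_eq_sum_degree) auto
  have rq: "{z. poly q z = 0} = Orb"
    unfolding q_def poly_prod using finO by (auto simp: prod_zero_iff)
  have "min_poly_over F x q"
    unfolding min_poly_over_def
  proof (intro conjI allI impI)
    show "q \<noteq> 0" "lead_coeff q = 1" by (fact q0', fact lc)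
    show "coeff q i \<in> F" for i using qF by (simp add: cin_def)
    show "poly q x = 0" using rq xO by blast
  next
    fix r assume r: "r \<noteq> 0 \<and> (\<forall>i. coeff r i \<in> F) \<and> poly r x = 0"
    then have "Orb \<subseteq> {z. poly r z = 0}" using Oroots by (simp add: cin_def)
    then have "card Orb \<le> card {z. poly r z = 0}" using poly_roots_finite[of r] r by (intro card_mono) auto
    then show "degree q \<le> degree r" using dq card_poly_roots_bound[of r] r by linarith
  qed
  moreover have "card {r \<in> M. poly q r = 0} = degree q"
  proof -
    have "{r \<in> M. poly q r = 0} = Orb" using rq OM by blast
    then show ?thesis using dq by simp
  qed
  ultimately show "\<exists>p. min_poly_over F x p \<and> card {r \<in> M. poly p r = 0} = degree p" by blast
qed

end



context qc begin

lemma lemQ: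
  assumes rr: "r * r \<in> qpow F (Suc k)"
    and cond: "\<And>s. autK F s \<Longrightarrow> \<exists>w\<in>qpow F (Suc k). s r = w * r"
  shows "r \<in> qpow F (Suc (Suc k))"
proof (cases "r \<in> qpow F (Suc k)")
  case True then show ?thesis using qpow_mono_Suc by blast
next
  case False
  let ?B = "qpow F (Suc k)"
  have B: "subfield ?B" using qpow_subfield[OF F_sub] .
  have FB: "F \<subseteq> ?B" by (rule qpow_base)
  let ?M = "adj ?B r"
  have q: "quad_ext ?B ?M" by (rule quad_ext_adj[OF B rr False])
  have "galois F ?M"
  proof (rule galois_of_stable)
    show "subfield ?M" by (rule adj_subfield[OF B rr])
    show "F \<subseteq> ?M" using FB adj_sub[OF B] by blast
  next
    fix s x assume a: "autK F s" and x: "x \<in> ?M"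
    obtain u v where uv: "x = u + v * r" "u \<in> ?B" "v \<in> ?B" using x unfolding adj_def by blast
    obtain w where w: "w \<in> ?B" "s r = w * r" using cond[OF a] by blast
    have h: "hom s" using a by (simp add: autK_def)
    have "s x = s u + (s v * w) * r" using uv w by (simp add: hom_add[OF h] hom_mult[OF h])
    moreover have "s u \<in> ?B" "s v * w \<in> ?B" using qpow_stable[OF a] uv w B by (auto intro: subfield_mult)
    ultimately show "s x \<in> ?M" unfolding adj_def by blast
  qed
  then have "?M \<subseteq> \<Union>{L. quad_ext ?B L \<and> galois F L}" using q by blast
  then have "?M \<subseteq> qpow F (Suc (Suc k))" unfolding qpow_SS using gen_field_sup by blast
  then show ?thesis using adj_gen[OF B] by blast
qed

lemma aut_sq: "autK F s \<Longrightarrow> s x * s x = x * x \<Longrightarrow> s x = x \<or> s x = - x"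
  using square_eq_iff by blast

lemma lemR:
  assumes eF: "e \<notin> F" and ee: "e * e \<in> F"
    and r0: "r \<noteq> 0" and rr: "r * r \<in> qpow F (Suc (Suc j))"
    and c1: "\<And>t. autK F t \<Longrightarrow> t e = e \<Longrightarrow> \<exists>v\<in>qpow F (Suc j). t r = v * r"
    and c2: "\<And>s. autK F s \<Longrightarrow> s e \<noteq> e \<Longrightarrow> r * r * (s r * s r) \<in> qpow F (Suc j)"
  shows "r \<in> qpow F (Suc (Suc (Suc j)))"
proof -
  let ?B = "qpow F (Suc j)" and ?B' = "qpow F (Suc (Suc j))"
  have B: "subfield ?B" and B': "subfield ?B'" using qpow_subfield[OF F_sub] by blast+
  have BB': "?B \<subseteq> ?B'" by (rule qpow_mono_Suc)
  have e0: "e \<noteq> 0"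
  proof
    assume "e = 0"
    then have "e \<in> F" using F_sub subfield_0 by simp
    then show False using eF by simp
  qed
  have eme: "e \<noteq> - e"
  proof
    assume h: "e = - e"
    have "e + e = e + - e" using h by (rule arg_cong)
    then have "e + e = 0" by (simp only: add.right_inverse)
    then have "2 * e = 0" by (simp only: mult_2)
    then show False using two e0 by (simp only: mult_eq_0_iff) blast
  qed
  have pm: "s e = e \<or> s e = - e" if a: "autK F s" for s
  proof -
    have h: "hom s" using a by (simp add: autK_def)
    have "s (e * e) = e * e" using a ee by (simp add: autK_def)
    then have "s e * s e = e * e" using hom_mult[OF h, of e e] by simp
    then show ?thesis by (rule aut_sq[OF a])
  qed
  show ?thesis
  proof (cases "\<forall>s. autK F s \<longrightarrow> s e = e")
    case True
    show ?thesis
    proof (rule lemQ[OF rr])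
      fix s assume a: "autK F s"
      then obtain v where "v \<in> ?B" "s r = v * r" using c1 True by blast
      then show "\<exists>w\<in>?B'. s r = w * r" using BB' by blast
    qed
  next
    case False
    then obtain s0 where a0: "autK F s0" and s0e: "s0 e \<noteq> e" by blast
    then have s0e': "s0 e = - e" using pm by blast
    have h0: "hom s0" using a0 by (simp add: autK_def)
    have b0: "bij s0" using a0 by (simp add: autK_def)
    have inv1: "s0 (inv s0 y) = y" for y using b0 by (simp add: bij_is_surj surj_f_inv_f)
    have nontriv: "\<exists>w\<in>?B. p r = w * s0 r" if ap: "autK F p" and pe: "p e \<noteq> e" for p
    proof -
      let ?t = "inv s0 \<circ> p"
      have at: "autK F ?t" using autK_comp[OF autK_inv[OF a0] ap] .
      have "p e = - e" using pm[OF ap] pe by blast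
      moreover have "inv s0 (- e) = e" using inv_f_f[OF bij_is_inj[OF b0], of e] s0e' by simp
      ultimately have "?t e = e" by simp
      then obtain v where v: "v \<in> ?B" "?t r = v * r" using c1[OF at] by blast
      have "p r = s0 (?t r)" using inv1 by simp
      also have "\<dots> = s0 v * s0 r" using v hom_mult[OF h0] by simp
      finally show ?thesis using qpow_stable[OF a0] v by blast
    qed
    define s where "s = r * s0 r"
    have "s * s = r * r * (s0 r * s0 r)" unfolding s_def by (simp add: ac_simps)
    then have ss: "s * s \<in> ?B" using c2[OF a0 s0e] by simp
    have sB': "s \<in> ?B'"
    proof (rule lemQ[OF ss])
      fix p assume ap: "autK F p"
      have hp: "hom p" using ap by (simp add: autK_def)
      have aps: "autK F (p \<circ> s0)" using autK_comp[OF ap a0] .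
      have ps: "p s = p r * (p \<circ> s0) r" unfolding s_def using hom_mult[OF hp] by simp
      show "\<exists>w\<in>?B. p s = w * s"
      proof (cases "p e = e")
        case True
        obtain v where v: "v \<in> ?B" "p r = v * r" using c1[OF ap True] by blast
        have "(p \<circ> s0) e = - e" using True s0e' hom_uminus[OF hp] by simp
        then have "(p \<circ> s0) e \<noteq> e" using eme by simp
        then obtain w where w: "w \<in> ?B" "(p \<circ> s0) r = w * s0 r" using nontriv[OF aps] by blast
        have "p s = (v * w) * s" using ps v w unfolding s_def by (simp add: ac_simps)
        then show ?thesis using v w B subfield_mult by blast
      next
        case False
        obtain w where w: "w \<in> ?B" "p r = w * s0 r" using nontriv[OF ap False] by blast
        have "p e = - e" using pm[OF ap] False by blast
        then have "(p \<circ> s0) e = e" using s0e' hom_uminus[OF hp] by simp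
        then obtain v where v: "v \<in> ?B" "(p \<circ> s0) r = v * r" using c1[OF aps] by blast
        have "p s = (v * w) * s" using ps v w unfolding s_def by (simp add: ac_simps)
        then show ?thesis using v w B subfield_mult by blast
      qed
    qed
    show ?thesis
    proof (rule lemQ[OF rr])
      fix p assume ap: "autK F p"
      show "\<exists>w\<in>?B'. p r = w * r"
      proof (cases "p e = e")
        case True
        then obtain v where "v \<in> ?B" "p r = v * r" using c1[OF ap] by blast
        then show ?thesis using BB' by blast
      next
        case False
        obtain w where w: "w \<in> ?B" "p r = w * s0 r" using nontriv[OF ap False] by blast
        have rr0: "r * r \<noteq> 0" using r0 by simp
        have "(s / (r * r)) * r = (s0 r * (r * r)) / (r * r)" unfolding s_def
          by (simp add: ac_simps times_divide_eq_left)
        then have "s0 r = (s / (r * r)) * r" using rr0 by simp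
        then have "p r = (w * s / (r * r)) * r" using w by simp
        moreover have "w * s / (r * r) \<in> ?B'" using w BB' sB' rr B' by (auto intro!: subfield_divide subfield_mult)
        ultimately show ?thesis by blast
      qed
    qed
  qed
qed

end



context qc begin

lemma aut_pm: assumes a: "autK F s" and ee: "e * e \<in> F" shows "s e = e \<or> s e = - e"
proof -
  have h: "hom s" using a by (simp add: autK_def)
  have "s (e * e) = e * e" using a ee by (simp add: autK_def)
  then have "s e * s e = e * e" using hom_mult[OF h, of e e] by simp
  then show ?thesis by (rule aut_sq[OF a])
qed

lemma fixL: assumes a: "autK F t" and te: "t e = e" shows "autK (adj F e) t"
proof -
  have h: "hom t" and fx: "\<forall>x\<in>F. t x = x" and b: "bij t" using a by (auto simp: autK_def)
  have "\<forall>x\<in>adj F e. t x = x"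
  proof
    fix x assume "x \<in> adj F e"
    then obtain u v where uv: "x = u + v * e" "u \<in> F" "v \<in> F" unfolding adj_def by blast
    then show "t x = x" using fx te by (simp add: hom_add[OF h] hom_mult[OF h])
  qed
  then show ?thesis using h b by (simp add: autK_def)
qed

lemma one_in: "(1::'a) \<in> qpow F n" "(- 1::'a) \<in> qpow F n"
  using qpow_base[of F n] F_sub subfield_1 subfield_uminus by blast+

lemma step0:
  assumes ee: "e * e \<in> F"
  shows "adj F e \<subseteq> qpow F (Suc (Suc 0))"
proof -
  have "e \<in> qpow F (Suc (Suc 0))"
  proof (rule lemQ)
    show "e * e \<in> qpow F (Suc 0)" using ee by simp
    fix s assume "autK F s"
    then have "s e = 1 * e \<or> s e = (- 1) * e" using aut_pm ee by simp
    then show "\<exists>w\<in>qpow F (Suc 0). s e = w * e" using one_in by blast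
  qed
  then show ?thesis using adj_in[OF qpow_subfield[OF F_sub] qpow_base] by blast
qed

lemma step1:
  assumes eF: "e \<notin> F" and ee: "e * e \<in> F"
  shows "qpow (adj F e) (Suc (Suc 0)) \<subseteq> qpow F (Suc (Suc (Suc 0)))"
proof -
  let ?L = "adj F e"
  have L: "subfield ?L" using adj_subfield[OF F_sub ee] .
  have L3: "?L \<subseteq> qpow F (Suc (Suc (Suc 0)))" using step0[OF ee] qpow_mono_Suc by blast
  have S3: "subfield (qpow F (Suc (Suc (Suc 0))))" using qpow_subfield[OF F_sub] .
  have "M \<subseteq> qpow F (Suc (Suc (Suc 0)))" if M: "quad_ext ?L M" "galois ?L M" for M
  proof -
    obtain r where r: "r \<notin> ?L" "r * r \<in> ?L" "M = adj ?L r" using quad_ext_rep[OF M(1) two] by blast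
    have r0: "r \<noteq> 0" using r(1) L subfield_0 by auto
    have "r \<in> qpow F (Suc (Suc (Suc 0)))"
    proof (rule lemR[OF eF ee r0])
      show "r * r \<in> qpow F (Suc (Suc 0))" using r(2) step0[OF ee] by blast
    next
      fix t assume a: "autK F t" and te: "t e = e"
      have aL: "autK ?L t" by (rule fixL[OF a te])
      have h: "hom t" using a by (simp add: autK_def)
      have "t (r * r) = r * r" using aL r(2) by (simp add: autK_def)
      then have "t r * t r = r * r" using hom_mult[OF h, of r r] by simp
      then have "t r = 1 * r \<or> t r = (- 1) * r" using square_eq_iff by auto
      then show "\<exists>v\<in>qpow F (Suc 0). t r = v * r" using one_in by blast
    next
      fix s assume a: "autK F s" and se: "s e \<noteq> e"
      have h: "hom s" and fx: "\<forall>x\<in>F. s x = x" using a by (auto simp: autK_def)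
      have sme: "s e = - e" using aut_pm[OF a ee] se by blast
      obtain u v where uv: "r * r = u + v * e" "u \<in> F" "v \<in> F" using r(2) unfolding adj_def by blast
      have "s r * s r = s (r * r)" using hom_mult[OF h] by simp
      also have "\<dots> = u - v * e" using uv fx sme by (simp add: hom_add[OF h] hom_mult[OF h])
      finally have X: "s r * s r = u - v * e" .
      have "r * r * (s r * s r) = (u + v * e) * (u - v * e)" using uv(1) X by simp
      also have "\<dots> = u * u - v * v * (e * e)" by (simp add: algebra_simps)
      finally have "r * r * (s r * s r) = u * u - v * v * (e * e)" .
      moreover have "u * u - v * v * (e * e) \<in> F" using uv ee F_sub
        by (auto intro!: subfield_diff subfield_mult)
      ultimately show "r * r * (s r * s r) \<in> qpow F (Suc 0)" by simp
    qed
    then show ?thesis using r(3) adj_in[OF S3 L3] by blast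
  qed
  then have "?L \<union> \<Union>{M. quad_ext ?L M \<and> galois ?L M} \<subseteq> qpow F (Suc (Suc (Suc 0)))" using L3 by blast
  then show ?thesis using gen_field_least[OF S3] by simp
qed

lemma step2:
  assumes eF: "e \<notin> F" and ee: "e * e \<in> F"
  shows "qpow (adj F e) (Suc (Suc (Suc 0))) \<subseteq> qpow F (Suc (Suc (Suc (Suc (Suc 0)))))"
proof -
  let ?L = "adj F e"
  let ?A = "qpow ?L (Suc (Suc 0))"
  let ?F3 = "qpow F (Suc (Suc (Suc 0)))" and ?F4 = "qpow F (Suc (Suc (Suc (Suc 0))))"
    and ?F5 = "qpow F (Suc (Suc (Suc (Suc (Suc 0)))))"
  have L: "subfield ?L" using adj_subfield[OF F_sub ee] .
  have A: "subfield ?A" using qpow_subfield[OF L] .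
  have A3: "?A \<subseteq> ?F3" by (rule step1[OF eF ee])
  have F35: "?F3 \<subseteq> ?F5" by (rule qpow_mono) simp
  have F34: "?F3 \<subseteq> ?F4" by (rule qpow_mono) simp
  have A5: "?A \<subseteq> ?F5" using A3 F35 by blast
  have S5: "subfield ?F5" using qpow_subfield[OF F_sub] .
  have S3: "subfield ?F3" using qpow_subfield[OF F_sub] .
  have "M \<subseteq> ?F5" if M: "quad_ext ?A M" "galois ?L M" for M
  proof -
    obtain r where r: "r \<notin> ?A" "r * r \<in> ?A" "M = adj ?A r" using quad_ext_rep[OF M(1) two] by blast
    have r0: "r \<noteq> 0" using r(1) A subfield_0 by auto
    have rM: "r \<in> M" using r(3) adj_gen[OF A] by simp
    have "r \<in> ?F5"
    proof (rule lemR[OF eF ee r0])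
      show "r * r \<in> ?F4" using r(2) A3 F34 by blast
    next
      fix t assume a: "autK F t" and te: "t e = e"
      have aL: "autK ?L t" by (rule fixL[OF a te])
      have h: "hom t" using a by (simp add: autK_def)
      have "t r \<in> M" by (rule galois_stable[OF M(2) aL rM])
      then obtain u v where uv: "t r = u + v * r" "u \<in> ?A" "v \<in> ?A" using r(3) unfolding adj_def by blast
      have trr: "t (r * r) \<in> ?A" by (rule qpow_stable[OF aL r(2)])
      have sq: "t (r * r) = u * u + v * v * (r * r) + (2 * u * v) * r"
        using uv hom_mult[OF h, of r r] by (simp add: algebra_simps mult_2)
      have v0: "v \<noteq> 0"
      proof
        assume "v = 0"
        then have "t r \<in> ?A" using uv by simp
        then have "inv t (t r) \<in> ?A" by (rule qpow_stable[OF autK_inv[OF aL]])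
        moreover have "inv t (t r) = r" using a by (simp add: autK_def bij_is_inj inv_f_f)
        ultimately show False using r(1) by simp
      qed
      have u0: "u = 0"
      proof (rule ccontr)
        assume u0: "u \<noteq> 0"
        have d0: "2 * u * v \<noteq> 0" using u0 v0 two by simp
        have "r = (t (r * r) - u * u - v * v * (r * r)) / (2 * u * v)"
          using sq d0 by (simp add: field_simps)
        moreover have "(t (r * r) - u * u - v * v * (r * r)) / (2 * u * v) \<in> ?A"
          using trr uv r(2) A by (auto intro!: subfield_divide subfield_diff subfield_mult subfield_numeral)
        ultimately show False using r(1) by simp
      qed
      have "t r = v * r" using uv u0 by simp
      then show "\<exists>v\<in>?F3. t r = v * r" using uv A3 by blast
    next
      fix s assume a: "autK F s" and se: "s e \<noteq> e"
      have h: "hom s" using a by (simp add: autK_def)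
      have "r * r * (s r * s r) = (r * r) * s (r * r)" using hom_mult[OF h] by simp
      moreover have "r * r \<in> ?F3" using r(2) A3 by blast
      moreover have "s (r * r) \<in> ?F3" using qpow_stable[OF a] \<open>r * r \<in> ?F3\<close> by blast
      ultimately show "r * r * (s r * s r) \<in> ?F3" using S3 subfield_mult by metis
    qed
    then show ?thesis using r(3) adj_in[OF S5 A5] by blast
  qed
  then have "?A \<union> \<Union>{M. quad_ext ?A M \<and> galois ?L M} \<subseteq> ?F5" using A5 by blast
  then show ?thesis using gen_field_least[OF S5] by (simp only: qpow_SS)
qed

end

theorem corollary1:
  fixes F :: "'a::field set"
  assumes "subfield F"
    and "(2::'a) \<noteq> 0"
    and "is_quadratic_closure F"
  shows "gen_field (F \<union> \<Union>{W_field L | L. quad_ext F L}) \<subseteq> qpow F 5"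
proof -
  interpret qc F using assms by (unfold_locales) auto
  have five: "(5::nat) = Suc (Suc (Suc (Suc (Suc 0))))" and three: "(3::nat) = Suc (Suc (Suc 0))" by simp_all
  have S5: "subfield (qpow F 5)" using qpow_subfield[OF F_sub] .
  have "W_field L \<subseteq> qpow F 5" if q: "quad_ext F L" for L
  proof -
    obtain e where e: "e \<notin> F" "e * e \<in> F" "L = adj F e" using quad_ext_rep[OF q two] by blast
    show ?thesis unfolding W_field_def e(3) five three by (rule step2[OF e(1,2)])
  qed
  moreover have "F \<subseteq> qpow F 5" by (rule qpow_base)
  ultimately show ?thesis by (intro gen_field_least[OF S5]) blast
qed



end
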